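(* Let $(p_n),(q_n)$ be sequences in $[0,1]$. If $P(n,p_n,q_n)=o(n^{-1})$, then for any $\alpha>0$, $P(\lfloor\alpha n\rfloor,p_n,q_n)\to0$ as $n\to\infty$.
   Context: For integers $m,n\ge0$ and $p,q\in[0,1]$, $P(m,n,p,q)=\Pr(Y\ge X)$ where $X\sim\mathrm{Binom}(m,\max\{p,q\})$ and $Y\sim\mathrm{Binom}(n,\min\{p,q\})$ are independent; $P(n,p,q)=P(n,n,p,q)$. *)

theory Defs
  imports "HOL-Analysis.Analysis" "HOL-Library.Landau_Symbols"
begin

definition binom_pmf :: "nat \<Rightarrow> real \<Rightarrow> nat \<Rightarrow> real" where
  "binom_pmf n p k = real (n choose k) * p ^ k * (1 - p) ^ (n - k)"

text \<open>P(m,n,p,q) = Pr(Y \<ge> X), X ~ Binom(m, max p q), Y ~ Binom(n, min p q) independent.\<close>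
definition Pmn :: "nat \<Rightarrow> nat \<Rightarrow> real \<Rightarrow> real \<Rightarrow> real" where
  "Pmn m n p q = (\<Sum>i\<le>m. \<Sum>j\<in>{i..n}.
      binom_pmf m (max p q) i * binom_pmf n (min p q) j)"

definition Pn :: "nat \<Rightarrow> real \<Rightarrow> real \<Rightarrow> real" where
  "Pn n p q = Pmn n n p q"

end

theory Submission
  imports Defs
begin

lemma binom_pmf_nonneg: "0 \<le> p \<Longrightarrow> p \<le> 1 \<Longrightarrow> 0 \<le> binom_pmf n p k"
  by (simp add: binom_pmf_def)

lemma binom_gen: "(\<Sum>k\<le>n. binom_pmf n p k * x^k) = (p*x + (1-p))^n"
  by (simp add: binom_pmf_def binomial_ring[of "p*x" "1-p" n] power_mult_distrib mult_ac)

lemma chernoff: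
  fixes p q t :: real
  assumes "p \<in> {0..1}" "q \<in> {0..1}" "t \<ge> 1"
  shows "Pmn m n p q \<le> (max p q * (1/t) + (1 - max p q))^m * (min p q * t + (1 - min p q))^n"
proof -
  define a b where "a = max p q" and "b = min p q"
  have ab: "0\<le>a" "a\<le>1" "0\<le>b" "b\<le>1" using assms by (auto simp: a_def b_def)
  have "Pmn m n p q = (\<Sum>i\<le>m. \<Sum>j\<in>{i..n}. binom_pmf m a i * binom_pmf n b j)"
    by (simp add: Pmn_def a_def b_def)
  also have "\<dots> \<le> (\<Sum>i\<le>m. \<Sum>j\<le>n. (binom_pmf m a i * (1/t)^i) * (binom_pmf n b j * t^j))"
  proof (rule sum_mono)
    fix i assume "i \<in> {..m}"
    have "(\<Sum>j\<in>{i..n}. binom_pmf m a i * binom_pmf n b j)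
        \<le> (\<Sum>j\<in>{i..n}. (binom_pmf m a i * (1/t)^i) * (binom_pmf n b j * t^j))"
    proof (rule sum_mono)
      fix j assume "j \<in> {i..n}"
      hence "t^i \<le> t^j" using assms by (intro power_increasing) auto
      moreover have "t^i > 0" using assms by simp
      ultimately have "1 \<le> (1/t)^i * t^j" by (simp add: power_one_over field_simps)
      moreover have "0 \<le> binom_pmf m a i * binom_pmf n b j" using ab by (simp add: binom_pmf_nonneg)
      ultimately have "binom_pmf m a i * binom_pmf n b j * 1 \<le> binom_pmf m a i * binom_pmf n b j * ((1/t)^i * t^j)"
        by (intro mult_left_mono) auto
      thus "binom_pmf m a i * binom_pmf n b j \<le> (binom_pmf m a i * (1/t)^i) * (binom_pmf n b j * t^j)"
        by (simp add: mult_ac)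
    qed
    also have "\<dots> \<le> (\<Sum>j\<le>n. (binom_pmf m a i * (1/t)^i) * (binom_pmf n b j * t^j))"
      using ab assms by (intro sum_mono2) (auto simp: binom_pmf_nonneg)
    finally show "(\<Sum>j\<in>{i..n}. binom_pmf m a i * binom_pmf n b j)
        \<le> (\<Sum>j\<le>n. (binom_pmf m a i * (1/t)^i) * (binom_pmf n b j * t^j))" .
  qed
  also have "\<dots> = (\<Sum>i\<le>m. binom_pmf m a i * (1/t)^i) * (\<Sum>j\<le>n. binom_pmf n b j * t^j)"
    by (simp add: sum_product)
  also have "\<dots> = (a * (1/t) + (1 - a))^m * (b * t + (1 - b))^n"
    by (simp only: binom_gen)
  finally show ?thesis by (simp add: a_def b_def)
qed

lemma lower:
  fixes p q :: real
  assumes "p \<in> {0..1}" "q \<in> {0..1}"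
  shows "((sqrt (max p q * min p q) + sqrt ((1 - max p q) * (1 - min p q)))^2)^n / (n+1) \<le> Pn n p q"
proof -
  define a b where "a = max p q" and "b = min p q"
  have ab: "0\<le>a" "a\<le>1" "0\<le>b" "b\<le>1" using assms by (auto simp: a_def b_def)
  define s r where "s = sqrt (a*b)" and "r = sqrt ((1-a)*(1-b))"
  have s2: "s^2 = a*b" and r2: "r^2 = (1-a)*(1-b)" using ab by (auto simp: s_def r_def)
  define c where "c i = real (n choose i) * s^i * r^(n-i)" for i
  have "(\<Sum>i\<le>n. c i) = (s + r)^n" by (simp add: c_def binomial_ring[of s r n])
  have cc: "(c i)^2 = binom_pmf n a i * binom_pmf n b i" for i
  proof -
    have "(c i)^2 = real (n choose i)^2 * (s^2)^i * (r^2)^(n-i)"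
      by (simp add: c_def power_mult_distrib flip: power_mult) (simp add: mult.commute)
    also have "\<dots> = binom_pmf n a i * binom_pmf n b i"
      unfolding s2 r2 by (simp add: binom_pmf_def power_mult_distrib power2_eq_square mult_ac)
    finally show ?thesis .
  qed
  have "((s+r)^2)^n = ((\<Sum>i\<le>n. c i))^2"
    by (simp add: \<open>(\<Sum>i\<le>n. c i) = (s + r)^n\<close> flip: power_mult) (simp add: mult.commute)
  also have "\<dots> \<le> (\<Sum>i\<le>n. (c i)^2) * (n+1)"
    using sum_squared_le_sum_of_squares[of c "{..n}"] by simp
  finally have 1: "((s+r)^2)^n / (n+1) \<le> (\<Sum>i\<le>n. binom_pmf n a i * binom_pmf n b i)"
    by (simp add: cc divide_simps)
  also have "\<dots> \<le> Pn n p q"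
    unfolding Pn_def Pmn_def a_def[symmetric] b_def[symmetric]
  proof (rule sum_mono)
    fix i assume "i \<in> {..n}"
    thus "binom_pmf n a i * binom_pmf n b i \<le> (\<Sum>j\<in>{i..n}. binom_pmf n a i * binom_pmf n b j)"
      using ab by (intro member_le_sum) (auto simp: binom_pmf_nonneg)
  qed
  finally show ?thesis by (simp add: s_def r_def a_def b_def)
qed

lemma hval:
  fixes a b :: real
  assumes ab: "0\<le>b" "b\<le>a" "a\<le>1" and u: "b*(1-a) > 0"
  shows "\<exists>t\<ge>1. (a * (1/t) + (1 - a)) * (b * t + (1 - b)) = (sqrt (a*b) + sqrt ((1-a)*(1-b)))^2"
proof -
  define u v where "u = b*(1-a)" and "v = a*(1-b)"
  have "u \<le> v" using ab by (simp add: u_def v_def algebra_simps)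
  have "u > 0" using u by (simp add: u_def)
  define su sv where "su = sqrt u" and "sv = sqrt v"
  have su: "su > 0" "su^2 = u" using \<open>u>0\<close> by (auto simp: su_def)
  have sv: "sv > 0" "sv^2 = v" using \<open>u>0\<close> \<open>u\<le>v\<close> by (auto simp: sv_def)
  have "su \<le> sv" unfolding su_def sv_def using \<open>u\<le>v\<close> by simp
  define t where "t = sv / su"
  have "t \<ge> 1" using su \<open>su\<le>sv\<close> by (simp add: t_def)
  have cross: "sqrt (a*b) * sqrt ((1-a)*(1-b)) = su * sv"
    unfolding su_def sv_def u_def v_def by (simp flip: real_sqrt_mult add: mult_ac)
  have "(sqrt (a*b) + sqrt ((1-a)*(1-b)))^2 = a*b + (1-a)*(1-b) + 2 * (su * sv)"
    using ab by (simp add: power2_sum cross)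
  also have "\<dots> = (a * (1/t) + (1 - a)) * (b * t + (1 - b))"
  proof -
    have e1: "a*(1-b) = sv^2" and e2: "b*(1-a) = su^2" using su sv by (simp_all add: u_def v_def)
    have "(a * (1/t) + (1 - a)) * (b * t + (1 - b)) = a*b + (1-a)*(1-b) + (a*(1-b))/t + (b*(1-a))*t"
      using su sv by (simp add: t_def field_simps)
    also have "\<dots> = a*b + (1-a)*(1-b) + sv^2/t + su^2*t" by (simp only: e1 e2)
    also have "\<dots> = a*b + (1-a)*(1-b) + 2*(su * sv)" using su(1) sv(1) by (simp add: t_def field_simps power2_eq_square)
    finally show ?thesis by simp
  qed
  finally show ?thesis using \<open>t\<ge>1\<close> by metis
qed

lemma upper:
  fixes p q :: real
  assumes "p \<in> {0..1}" "q \<in> {0..1}"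
  shows "Pn k p q \<le> ((sqrt (max p q * min p q) + sqrt ((1 - max p q) * (1 - min p q)))^2)^k"
proof -
  define a b where "a = max p q" and "b = min p q"
  have ab: "0\<le>b" "b\<le>a" "a\<le>1" using assms by (auto simp: a_def b_def)
  have ch: "Pn k p q \<le> ((a * (1/t) + (1 - a)) * (b * t + (1 - b)))^k" if "t \<ge> 1" for t
    using chernoff[OF assms that, of k k] by (simp add: Pn_def a_def b_def power_mult_distrib)
  show ?thesis
  proof (cases "b*(1-a) > 0")
    case True
    then obtain t where "t\<ge>1" "(a * (1/t) + (1 - a)) * (b * t + (1 - b)) = (sqrt (a*b) + sqrt ((1-a)*(1-b)))^2"
      using hval[OF ab] by blast
    with ch[of t] show ?thesis by (simp add: a_def b_def)
  next
    case False
    hence "b = 0 \<or> a = 1" using ab by (auto simp: zero_less_mult_iff)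
    hence H: "(sqrt (a*b) + sqrt ((1-a)*(1-b)))^2 = a*b + (1-a)*(1-b)" using ab by auto
    have lim: "((\<lambda>t. ((a * (1/t) + (1 - a)) * (b * t + (1 - b)))^k) \<longlongrightarrow> (a*b + (1-a)*(1-b))^k) at_top"
    proof -
      have "((\<lambda>t. (a * (1/t) + (1 - a)) * (b * t + (1 - b))) \<longlongrightarrow> a*b + (1-a)*(1-b)) at_top"
      proof (cases "b = 0")
        case True
        have "((\<lambda>t::real. a * (1/t) + (1 - a)) \<longlongrightarrow> a * 0 + (1-a)) at_top"
          by (intro tendsto_intros tendsto_divide_0[OF tendsto_const] filterlim_at_top_imp_at_infinity filterlim_ident)
        thus ?thesis using True by simp
      next
        case False
        hence "a = 1" using \<open>b = 0 \<or> a = 1\<close> by simp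
        have "((\<lambda>t::real. b + (1-b) * (1/t)) \<longlongrightarrow> b + (1-b) * 0) at_top"
          by (intro tendsto_intros tendsto_divide_0[OF tendsto_const] filterlim_at_top_imp_at_infinity filterlim_ident)
        moreover have "eventually (\<lambda>t::real. b + (1-b) * (1/t) = (a * (1/t) + (1 - a)) * (b * t + (1 - b))) at_top"
          using eventually_gt_at_top[of 0] by eventually_elim (simp add: \<open>a=1\<close> field_simps)
        ultimately show ?thesis using \<open>a=1\<close> by (simp add: tendsto_cong)
      qed
      thus ?thesis by (intro tendsto_intros)
    qed
    have "Pn k p q \<le> (a*b + (1-a)*(1-b))^k"
    proof (rule tendsto_le[OF _ lim tendsto_const])
      show "eventually (\<lambda>t. Pn k p q \<le> ((a * (1/t) + (1 - a)) * (b * t + (1 - b)))^k) at_top"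
        using eventually_ge_at_top[of "1::real"] by eventually_elim (rule ch)
    qed simp
    thus ?thesis using H by (simp add: a_def b_def)
  qed
qed

lemma H_le1:
  fixes a b :: real
  assumes "0\<le>a" "a\<le>1" "0\<le>b" "b\<le>1"
  shows "(sqrt (a*b) + sqrt ((1-a)*(1-b)))^2 \<le> 1"
proof -
  have "sqrt (a*b) * sqrt ((1-a)*(1-b)) = sqrt ((a*(1-b)) * (b*(1-a)))"
    by (simp flip: real_sqrt_mult add: mult_ac)
  also have "\<dots> \<le> (a*(1-b) + b*(1-a))/2" using assms by (intro arith_geo_mean_sqrt) auto
  finally have c: "sqrt (a*b) * sqrt ((1-a)*(1-b)) \<le> (a*(1-b) + b*(1-a))/2" .
  have "(sqrt (a*b) + sqrt ((1-a)*(1-b)))^2 = a*b + (1-a)*(1-b) + 2*(sqrt (a*b) * sqrt ((1-a)*(1-b)))"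
    using assms by (simp add: power2_sum)
  also have "\<dots> \<le> 1" using c by (simp add: algebra_simps)
  finally show ?thesis .
qed

theorem lemma4p4:
  fixes p q :: "nat \<Rightarrow> real" and \<alpha> :: real
  assumes "\<And>n. p n \<in> {0..1}" and "\<And>n. q n \<in> {0..1}"
    and "(\<lambda>n. Pn n (p n) (q n)) \<in> o(\<lambda>n. 1 / real n)"
    and "\<alpha> > 0"
  shows "(\<lambda>n. Pn (nat \<lfloor>\<alpha> * real n\<rfloor>) (p n) (q n)) \<longlonglongrightarrow> 0"
proof -
  define H where "H n = (sqrt (max (p n) (q n) * min (p n) (q n)) + sqrt ((1 - max (p n) (q n)) * (1 - min (p n) (q n))))^2" for n
  have H0: "0 \<le> H n" for n by (simp add: H_def)
  have H1: "H n \<le> 1" for n unfolding H_def using assms(1,2)[of n]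
    by (intro H_le1) auto
  have low: "H n ^ n / (n+1) \<le> Pn n (p n) (q n)" for n
    unfolding H_def using lower[OF assms(1,2)] by simp
  have up: "Pn k (p n) (q n) \<le> H n ^ k" for k n
    unfolding H_def using upper[OF assms(1,2)] by simp
  have t1: "(\<lambda>n. Pn n (p n) (q n) / (1 / real n)) \<longlonglongrightarrow> 0"
    using smalloD_tendsto[OF assms(3)] .
  have t2: "(\<lambda>n. 2 * (Pn n (p n) (q n) / (1 / real n))) \<longlonglongrightarrow> 0"
    using tendsto_mult_right_zero[OF t1, of 2] by simp
  have Hn: "(\<lambda>n. H n ^ n) \<longlonglongrightarrow> 0"
  proof (rule tendsto_sandwich[OF _ _ tendsto_const t2])
    show "eventually (\<lambda>n. 0 \<le> H n ^ n) sequentially" using H0 by simp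
    show "eventually (\<lambda>n. H n ^ n \<le> 2 * (Pn n (p n) (q n) / (1 / real n))) sequentially"
      using eventually_ge_at_top[of "1::nat"]
    proof eventually_elim
      case (elim n)
      have "H n ^ n \<le> (n+1) * Pn n (p n) (q n)" using low[of n] by (simp add: divide_simps mult_ac)
      also have "\<dots> \<le> (2*n) * Pn n (p n) (q n)"
        using elim order_trans[OF _ low[of n]] H0[of n]
        by (intro mult_right_mono) (auto intro: divide_nonneg_nonneg)
      finally show ?case by (simp add: mult_ac)
    qed
  qed
  obtain k :: nat where k: "2 / \<alpha> \<le> real k" using real_arch_simple by blast
  have "k > 0" using k assms(4) by (auto intro: ccontr simp: field_simps)
  have ka: "2 \<le> real k * \<alpha>" using k assms(4) by (simp add: field_simps)
  have root0: "(\<lambda>n. root k (H n ^ n)) \<longlonglongrightarrow> 0"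
    using tendsto_real_root[OF Hn, of k] by simp
  show ?thesis
  proof (rule tendsto_sandwich[OF _ _ tendsto_const root0])
    show "eventually (\<lambda>n. 0 \<le> Pn (nat \<lfloor>\<alpha> * real n\<rfloor>) (p n) (q n)) sequentially"
      using assms(1,2) by (intro always_eventually allI) (auto simp: Pn_def Pmn_def le_max_iff_disj min_le_iff_disj intro!: sum_nonneg mult_nonneg_nonneg binom_pmf_nonneg)
    show "eventually (\<lambda>n. Pn (nat \<lfloor>\<alpha> * real n\<rfloor>) (p n) (q n) \<le> root k (H n ^ n)) sequentially"
      using eventually_ge_at_top[of k]
    proof eventually_elim
      case (elim n)
      define m where "m = nat \<lfloor>\<alpha> * real n\<rfloor>"
      have "real m \<ge> \<alpha> * real n - 1" unfolding m_def by linarith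
      hence "real k * real m \<ge> real k * (\<alpha> * real n - 1)" by (intro mult_left_mono) auto
      moreover have "real k * (\<alpha> * real n) \<ge> 2 * real n" using ka by (simp add: mult.assoc[symmetric] mult_right_mono)
      ultimately have "real (m * k) \<ge> real n" using elim by (simp add: algebra_simps)
      hence "n \<le> m * k" by linarith
      hence "(H n ^ m) ^ k \<le> H n ^ n" using H0 H1 by (simp flip: power_mult add: power_decreasing)
      hence "root k ((H n ^ m) ^ k) \<le> root k (H n ^ n)" using \<open>k>0\<close> by (rule real_root_le_mono[rotated])
      hence "H n ^ m \<le> root k (H n ^ n)" using \<open>k>0\<close> H0 by (simp add: real_root_power_cancel)
      with up[of m n] show ?case by (simp add: m_def)
    qed
  qed
qed

end
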